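(* Let $\mathcal{Q}\subset\mathbb{R}^n$ be compact and let $(\mathcal{E},\mathcal{D})$ be a compression code for $\mathcal{Q}$ operating at rate $r$ and distortion $\delta$, with codebook $\mathcal{C}$. Let $A\in\mathbb{R}^{d\times n}$ have i.i.d. $\mathcal{N}(0,1)$ entries. For ${\bf x}_o\in\mathcal{Q}$ let ${\bf y}_o=A{\bf x}_o+{\bf z}$, where ${\bf z}\in\mathbb{R}^d$ is a noise vector (possibly depending on $A$ and ${\bf x}_o$) satisfying $\|{\bf z}\|_2\le\zeta$, and let $\hat{{\bf x}}_o$ be any element of $\arg\min_{{\bf c}\in\mathcal{C}}\|{\bf y}_o-A{\bf c}\|_2^2$. Then for arbitrary $\tau_1>0$ and $\tau_2\in(0,1)$, \[ \|\hat{{\bf x}}_o-{\bf x}_o\|_2\le\delta\sqrt{\frac{1+\tau_1}{1-\tau_2}}+\frac{2\zeta}{\sqrt{(1-\tau_2)d}} \] with probability exceeding \[ 1-2^{r}{\rm e}^{\frac d2(\tau_2+\log(1-\tau_2))}-{\rm e}^{-\frac d2(\tau_1-\log(1+\tau_1))}. \]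
   Context: A compression code $(\mathcal{E},\mathcal{D})$ for $\mathcal{Q}$ at rate $r$ consists of an encoder $\mathcal{E}:\mathcal{Q}\to\{1,2,\dots,2^r\}$ and a decoder $\mathcal{D}:\{1,\dots,2^r\}\to\mathbb{R}^n$; its codebook is $\mathcal{C}=\{\mathcal{D}(\mathcal{E}({\bf x})):{\bf x}\in\mathcal{Q}\}$, and its distortion is $\delta=\sup_{{\bf x}\in\mathcal{Q}}\|{\bf x}-\mathcal{D}(\mathcal{E}({\bf x}))\|_2$. $\log$ is the natural logarithm. The probability is over $A$. *)

theory Defs
  imports "HOL-Probability.Probability"
begin

definition compression_code :: "(real^'n) set \<Rightarrow> nat \<Rightarrow> (real^'n \<Rightarrow> nat) \<Rightarrow> (nat \<Rightarrow> real^'n) \<Rightarrow> bool" where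
  "compression_code Q r E D \<longleftrightarrow> (\<forall>x\<in>Q. E x \<in> {1..2^r})"

definition codebook :: "(real^'n) set \<Rightarrow> (real^'n \<Rightarrow> nat) \<Rightarrow> (nat \<Rightarrow> real^'n) \<Rightarrow> (real^'n) set" where
  "codebook Q E D = (\<lambda>x. D (E x)) ` Q"

definition distortion :: "(real^'n) set \<Rightarrow> (real^'n \<Rightarrow> nat) \<Rightarrow> (nat \<Rightarrow> real^'n) \<Rightarrow> real" where
  "distortion Q E D = (SUP x\<in>Q. norm (x - D (E x)))"

end

theory Submission
  imports Defs
begin


lemma std_exp_sq:
  fixes c :: real assumes c: "c < 1/2"
  shows "std_normal_density x * exp (c * x\<^sup>2) = (1 / sqrt (1 - 2*c)) * normal_density 0 (1 / sqrt (1 - 2*c)) x"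
proof -
  define l where "l = 1 - 2*c"
  have l: "l > 0" using c by (simp add: l_def)
  have "normal_density 0 (1 / sqrt l) x = sqrt l / sqrt (2*pi) * exp (- (l * x\<^sup>2) / 2)"
    using l by (simp add: normal_density_def power_divide real_sqrt_divide real_sqrt_mult field_simps)
  moreover have "exp (- x\<^sup>2 / 2) * exp (c * x\<^sup>2) = exp (- (l * x\<^sup>2) / 2)"
  proof -
    have "- x\<^sup>2 / 2 + c * x\<^sup>2 = - (l * x\<^sup>2) / 2" by (simp add: l_def field_simps)
    then show ?thesis by (metis exp_add)
  qed
  ultimately show ?thesis unfolding l_def[symmetric] using l
    by (simp add: std_normal_density_def field_simps)
qed

lemma (in prob_space) mgf_sq:
  assumes X: "distributed M lborel X std_normal_density" and c: "c < 1/2"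
  shows "(\<integral>\<^sup>+\<omega>. ennreal (exp (c * (X \<omega>)\<^sup>2)) \<partial>M) = ennreal (1 / sqrt (1 - 2*c))"
proof -
  have "(\<integral>\<^sup>+\<omega>. ennreal (exp (c * (X \<omega>)\<^sup>2)) \<partial>M)
      = (\<integral>\<^sup>+x. ennreal (std_normal_density x) * ennreal (exp (c * x\<^sup>2)) \<partial>lborel)"
    by (rule distributed_nn_integral[OF X, symmetric]) simp
  also have "\<dots> = (\<integral>\<^sup>+x. ennreal (1 / sqrt (1 - 2*c)) * ennreal (normal_density 0 (1 / sqrt (1 - 2*c)) x) \<partial>lborel)"
    using c by (intro nn_integral_cong) (simp add: ennreal_mult''[symmetric] std_exp_sq)
  also have "\<dots> = ennreal (1 / sqrt (1 - 2*c)) * (\<integral>\<^sup>+x. ennreal (normal_density 0 (1 / sqrt (1 - 2*c)) x) \<partial>lborel)"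
    by (rule nn_integral_cmult) simp
  also have "(\<integral>\<^sup>+x. ennreal (normal_density 0 (1 / sqrt (1 - 2*c)) x) \<partial>lborel) = 1"
    using c by (subst nn_integral_eq_integral) (auto intro!: integrable_normal_density simp: integral_normal_density)
  finally show ?thesis by simp
qed

lemma (in prob_space) mgf_chi:
  assumes I: "finite I" and ind: "indep_vars (\<lambda>_. borel) X I"
    and N: "\<And>i. i \<in> I \<Longrightarrow> distributed M lborel (X i) std_normal_density" and c: "c < 1/2"
  shows "(\<integral>\<^sup>+\<omega>. ennreal (exp (c * (\<Sum>i\<in>I. (X i \<omega>)\<^sup>2))) \<partial>M) = ennreal ((1 / sqrt (1 - 2*c)) ^ card I)"
proof -
  have ind2: "indep_vars (\<lambda>_. borel) (\<lambda>i \<omega>. ennreal (exp (c * (X i \<omega>)\<^sup>2))) I"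
    by (rule indep_vars_compose2[OF ind]) simp
  have "(\<integral>\<^sup>+\<omega>. ennreal (exp (c * (\<Sum>i\<in>I. (X i \<omega>)\<^sup>2))) \<partial>M)
     = (\<integral>\<^sup>+\<omega>. (\<Prod>i\<in>I. ennreal (exp (c * (X i \<omega>)\<^sup>2))) \<partial>M)"
    by (simp add: sum_distrib_left exp_sum I prod_ennreal)
  also have "\<dots> = (\<Prod>i\<in>I. \<integral>\<^sup>+\<omega>. ennreal (exp (c * (X i \<omega>)\<^sup>2)) \<partial>M)"
    by (rule indep_vars_nn_integral[OF I ind2]) simp
  also have "\<dots> = (\<Prod>i\<in>I. ennreal (1 / sqrt (1 - 2*c)))"
    using N c by (intro prod.cong refl mgf_sq) auto
  also have "\<dots> = ennreal ((1 / sqrt (1 - 2*c)) ^ card I)"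
    using c by (simp add: prod_ennreal, subst ennreal_power) auto
  finally show ?thesis .
qed

lemma sqrt_pow_exp: "0 < (x::real) \<Longrightarrow> sqrt x ^ n = exp (real n / 2 * ln x)"
proof -
  assume x: "0 < x"
  have "sqrt x ^ n = exp (ln (sqrt x)) ^ n" using x by simp
  also have "\<dots> = exp (real n * ln (sqrt x))" by (simp add: exp_of_nat_mult)
  also have "ln (sqrt x) = ln x / 2" using x by (simp add: ln_sqrt)
  finally show ?thesis by simp
qed

lemma (in prob_space) std_sq_nn:
  assumes X: "distributed M lborel X std_normal_density"
  shows "(\<integral>\<^sup>+\<omega>. ennreal ((X \<omega>)\<^sup>2) \<partial>M) = 1"
proof -
  have "(\<integral>\<^sup>+\<omega>. ennreal ((X \<omega>)\<^sup>2) \<partial>M)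
      = (\<integral>\<^sup>+x. ennreal (std_normal_density x) * ennreal (x\<^sup>2) \<partial>lborel)"
    by (rule distributed_nn_integral[OF X, symmetric]) simp
  also have "\<dots> = (\<integral>\<^sup>+x. ennreal (std_normal_density x * x ^ 2) \<partial>lborel)"
    by (intro nn_integral_cong) (simp add: ennreal_mult''[symmetric])
  also have "\<dots> = ennreal (integral\<^sup>L lborel (\<lambda>x. std_normal_density x * x ^ 2))"
    by (subst nn_integral_eq_integral)
       (auto intro!: integrable_std_normal_moment)
  also have "integral\<^sup>L lborel (\<lambda>x. std_normal_density x * x ^ 2) = 1"
    using integral_std_normal_moment_even[of 1] by (simp add: numeral_2_eq_2)
  finally show ?thesis by simp
qed

lemma (in prob_space) chi_lower:
  fixes X :: "'i \<Rightarrow> 'a \<Rightarrow> real" and \<tau> :: real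
  assumes I: "finite I" and ind: "indep_vars (\<lambda>_. borel) X I"
    and N: "\<And>i. i \<in> I \<Longrightarrow> distributed M lborel (X i) std_normal_density"
    and t: "0 < \<tau>" "\<tau> < 1"
  shows "prob {\<omega>\<in>space M. (\<Sum>i\<in>I. (X i \<omega>)\<^sup>2) \<le> (1 - \<tau>) * card I}
          \<le> exp (card I / 2 * (\<tau> + ln (1 - \<tau>)))"
proof -
  define s where "s = \<tau> / (2 * (1 - \<tau>))"
  define W where "W \<omega> = (\<Sum>i\<in>I. (X i \<omega>)\<^sup>2)" for \<omega>
  define b where "b = (1 - \<tau>) * card I"
  have s: "0 < s" using t by (simp add: s_def)
  have hX[measurable]: "\<And>i. i \<in> I \<Longrightarrow> X i \<in> borel_measurable M"
    using distributed_measurable[OF N] by simp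
  have W[measurable]: "W \<in> borel_measurable M"
    unfolding W_def by (intro borel_measurable_sum borel_measurable_power hX)
  define S where "S = {\<omega>\<in>space M. W \<omega> \<le> b}"
  have S[measurable]: "S \<in> sets M" unfolding S_def by measurable
  have "emeasure M S = (\<integral>\<^sup>+\<omega>. indicator S \<omega> \<partial>M)"
    using S by simp
  also have "\<dots> \<le> (\<integral>\<^sup>+\<omega>. ennreal (exp (s * b)) * ennreal (exp ((- s) * W \<omega>)) \<partial>M)"
  proof (intro nn_integral_mono)
    fix \<omega> show "indicator S \<omega> \<le> ennreal (exp (s * b)) * ennreal (exp ((- s) * W \<omega>))"
    proof (cases "\<omega> \<in> S")
      case True
      then have "W \<omega> \<le> b" by (simp add: S_def)
      have e: "exp (s * b) * exp ((- s) * W \<omega>) = exp (s * (b - W \<omega>))"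
        by (simp add: mult_exp_exp right_diff_distrib)
      have "0 \<le> s * (b - W \<omega>)" using s \<open>W \<omega> \<le> b\<close> by simp
      then have "1 \<le> exp (s * b) * exp ((- s) * W \<omega>)"
        unfolding e by simp
      then show ?thesis using True by (simp add: ennreal_mult''[symmetric])
    qed simp
  qed
  also have "\<dots> = ennreal (exp (s * b)) * (\<integral>\<^sup>+\<omega>. ennreal (exp ((- s) * W \<omega>)) \<partial>M)"
    by (rule nn_integral_cmult) simp
  also have "(\<integral>\<^sup>+\<omega>. ennreal (exp ((- s) * W \<omega>)) \<partial>M) = ennreal ((1 / sqrt (1 - 2 * (- s))) ^ card I)"
    unfolding W_def by (rule mgf_chi[OF I ind N]) (use s in auto)
  also have "ennreal (exp (s * b)) * ennreal ((1 / sqrt (1 - 2 * (- s))) ^ card I)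
      = ennreal (exp (card I / 2 * (\<tau> + ln (1 - \<tau>))))"
  proof -
    have "1 - 2 * (- s) = 1 / (1 - \<tau>)" using t by (simp add: s_def field_simps)
    then have "1 / sqrt (1 - 2 * (- s)) = sqrt (1 - \<tau>)" by (simp add: real_sqrt_divide)
    moreover have "sqrt (1 - \<tau>) ^ card I = exp (card I / 2 * ln (1 - \<tau>))"
      using t by (simp add: sqrt_pow_exp)
    moreover have "s * b = card I / 2 * \<tau>" using t by (simp add: s_def b_def field_simps)
    ultimately show ?thesis
      by (simp add: ennreal_mult''[symmetric] mult_exp_exp algebra_simps)
  qed
  finally have "emeasure M S \<le> ennreal (exp (card I / 2 * (\<tau> + ln (1 - \<tau>))))" .
  then show ?thesis
    by (simp add: emeasure_eq_measure S_def W_def b_def)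
qed

lemma (in prob_space) chi_upper:
  fixes X :: "'i \<Rightarrow> 'a \<Rightarrow> real" and \<tau> :: real
  assumes I: "finite I" "I \<noteq> {}" and ind: "indep_vars (\<lambda>_. borel) X I"
    and N: "\<And>i. i \<in> I \<Longrightarrow> distributed M lborel (X i) std_normal_density"
    and t: "0 < \<tau>"
  shows "prob {\<omega>\<in>space M. (1 + \<tau>) * card I \<le> (\<Sum>i\<in>I. (X i \<omega>)\<^sup>2)}
          < exp (- (card I / 2) * (\<tau> - ln (1 + \<tau>)))"
proof -
  define s where "s = \<tau> / (2 * (1 + \<tau>))"
  define W where "W \<omega> = (\<Sum>i\<in>I. (X i \<omega>)\<^sup>2)" for \<omega>
  define a where "a = (1 + \<tau>) * card I"
  have d: "0 < card I" using I by auto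
  have s: "0 < s" "s < 1/2" using t by (auto simp: s_def field_simps)
  have a: "0 < a" using t d by (simp add: a_def)
  have Wnn: "\<And>\<omega>. 0 \<le> W \<omega>" by (simp add: W_def sum_nonneg)
  have hX[measurable]: "\<And>i. i \<in> I \<Longrightarrow> X i \<in> borel_measurable M"
    using distributed_measurable[OF N] by simp
  have W[measurable]: "W \<in> borel_measurable M"
    unfolding W_def by (intro borel_measurable_sum borel_measurable_power hX)
  define S where "S = {\<omega>\<in>space M. a \<le> W \<omega>}"
  define T where "T = {\<omega>\<in>space M. W \<omega> < a}"
  have S[measurable]: "S \<in> sets M" unfolding S_def by measurable
  have T[measurable]: "T \<in> sets M" unfolding T_def by measurable
  have ST: "T = space M - S" by (auto simp: S_def T_def)
  have pT: "prob T = 1 - prob S" unfolding ST by (rule prob_compl[OF S])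
  \<comment> \<open>Markov: prob S < 1\<close>
  have "emeasure M S * ennreal a = (\<integral>\<^sup>+\<omega>. ennreal a * indicator S \<omega> \<partial>M)"
    using S by (simp add: nn_integral_cmult_indicator mult.commute)
  also have "\<dots> \<le> (\<integral>\<^sup>+\<omega>. ennreal (W \<omega>) \<partial>M)"
    by (intro nn_integral_mono) (auto simp: indicator_def S_def intro!: ennreal_leI)
  also have "\<dots> = (\<integral>\<^sup>+\<omega>. (\<Sum>i\<in>I. ennreal ((X i \<omega>)\<^sup>2)) \<partial>M)"
    unfolding W_def by (intro nn_integral_cong) (simp add: sum_ennreal)
  also have "\<dots> = (\<Sum>i\<in>I. \<integral>\<^sup>+\<omega>. ennreal ((X i \<omega>)\<^sup>2) \<partial>M)"
    by (rule nn_integral_sum) auto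
  also have "\<dots> = (\<Sum>i\<in>I. 1)"
    using N by (intro sum.cong refl std_sq_nn) auto
  finally have "ennreal (prob S * a) \<le> ennreal (card I)"
    using a by (simp add: emeasure_eq_measure ennreal_mult''[symmetric])
  then have "prob S * a \<le> card I" using d by (simp add: ennreal_le_iff)
  then have pa: "real (card I) * prob S + \<tau> * (real (card I) * prob S) \<le> real (card I)"
    by (simp add: a_def algebra_simps)
  have "prob S < 1"
  proof (rule ccontr)
    assume "\<not> prob S < 1"
    then have p1: "1 \<le> prob S" by simp
    then have "real (card I) \<le> real (card I) * prob S" using d by simp
    moreover have "0 < \<tau> * (real (card I) * prob S)" using t d p1 by simp
    ultimately show False using pa by linarith
  qed
  then have pTpos: "0 < prob T" using pT by simp
  have "ennreal (prob S) + ennreal (exp (- (s * a))) * ennreal (prob T)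
      = (\<integral>\<^sup>+\<omega>. indicator S \<omega> + ennreal (exp (- (s * a))) * indicator T \<omega> \<partial>M)"
    using S T by (simp add: nn_integral_add nn_integral_cmult_indicator emeasure_eq_measure)
  also have "\<dots> \<le> (\<integral>\<^sup>+\<omega>. ennreal (exp (- (s * a))) * ennreal (exp (s * W \<omega>)) \<partial>M)"
  proof (intro nn_integral_mono)
    fix \<omega>
    have e: "exp (- (s * a)) * exp (s * W \<omega>) = exp (s * (W \<omega> - a))"
      by (simp add: mult_exp_exp right_diff_distrib)
    show "indicator S \<omega> + ennreal (exp (- (s * a))) * indicator T \<omega>
        \<le> ennreal (exp (- (s * a))) * ennreal (exp (s * W \<omega>))"
    proof (cases "\<omega> \<in> S")
      case True
      then have "\<omega> \<notin> T" by (auto simp: S_def T_def)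
      have "0 \<le> s * (W \<omega> - a)" using s True by (simp add: S_def)
      then have "1 \<le> exp (- (s * a)) * exp (s * W \<omega>)" unfolding e by simp
      then show ?thesis using True \<open>\<omega> \<notin> T\<close> by (simp add: ennreal_mult''[symmetric])
    next
      case False
      have "exp (- (s * a)) * 1 \<le> exp (- (s * a)) * exp (s * W \<omega>)"
        using s Wnn[of \<omega>] by (intro mult_left_mono) auto
      then show ?thesis using False
        by (auto simp: indicator_def ennreal_mult''[symmetric] intro!: ennreal_leI)
    qed
  qed
  also have "\<dots> = ennreal (exp (- (s * a))) * (\<integral>\<^sup>+\<omega>. ennreal (exp (s * W \<omega>)) \<partial>M)"
    by (rule nn_integral_cmult) simp
  also have "(\<integral>\<^sup>+\<omega>. ennreal (exp (s * W \<omega>)) \<partial>M) = ennreal ((1 / sqrt (1 - 2 * s)) ^ card I)"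
    unfolding W_def by (rule mgf_chi[OF I(1) ind N]) (use s in auto)
  also have "ennreal (exp (- (s * a))) * ennreal ((1 / sqrt (1 - 2 * s)) ^ card I)
      = ennreal (exp (- (card I / 2) * (\<tau> - ln (1 + \<tau>))))"
  proof -
    have "1 - 2 * s = 1 / (1 + \<tau>)" using t by (simp add: s_def field_simps)
    then have "1 / sqrt (1 - 2 * s) = sqrt (1 + \<tau>)" by (simp add: real_sqrt_divide)
    moreover have "sqrt (1 + \<tau>) ^ card I = exp (card I / 2 * ln (1 + \<tau>))"
      using t by (simp add: sqrt_pow_exp)
    moreover have "s * a = card I / 2 * \<tau>" using t by (simp add: s_def a_def field_simps)
    ultimately have "exp (- (s * a)) * (1 / sqrt (1 - 2 * s)) ^ card I = exp (- (card I / 2) * (\<tau> - ln (1 + \<tau>)))"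
      by (simp add: mult_exp_exp[symmetric] exp_add[symmetric] algebra_simps) (simp add: field_simps)
    then show ?thesis
      by (metis ennreal_mult' exp_ge_zero)
  qed
  finally have "prob S + exp (- (s * a)) * prob T \<le> exp (- (card I / 2) * (\<tau> - ln (1 + \<tau>)))"
    by (simp add: ennreal_mult''[symmetric] ennreal_plus[symmetric] del: ennreal_plus)
  moreover have "0 < exp (- (s * a)) * prob T" using pTpos by simp
  ultimately show ?thesis by (simp add: S_def W_def a_def)
qed

lemma norm_sq_vec: "(norm (v::real^'n))\<^sup>2 = (\<Sum>j\<in>UNIV. (v$j)\<^sup>2)"
  unfolding power2_norm_eq_inner inner_vec_def by (simp add: power2_eq_square)

lemma mv_comp: "(m *v v) $ i = (\<Sum>j\<in>UNIV. m $ i $ j * v $ j)"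
  by (simp add: matrix_vector_mult_def)

lemma (in prob_space) row_normal:
  fixes A :: "'a \<Rightarrow> real^'n^'d" and v :: "real^'n"
  assumes ind: "indep_vars (\<lambda>_. borel) (\<lambda>(i, j) \<omega>. A \<omega> $ i $ j) UNIV"
    and N: "\<And>i j. distributed M lborel (\<lambda>\<omega>. A \<omega> $ i $ j) std_normal_density"
    and v: "v \<noteq> 0"
  shows "distributed M lborel (\<lambda>\<omega>. (A \<omega> *v v) $ i / norm v) std_normal_density"
proof -
  define J where "J = {j. v $ j \<noteq> 0}"
  define P where "P = Pair i ` J"
  define Y where "Y p \<omega> = A \<omega> $ fst p $ snd p * v $ snd p" for p \<omega>
  have J: "finite J" "J \<noteq> {}" using v by (auto simp: J_def vec_eq_iff)
  have P: "finite P" "P \<noteq> {}" using J by (auto simp: P_def)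
  have indY0: "indep_vars (\<lambda>_. borel) (\<lambda>p \<omega>. (\<lambda>x. x * v $ snd p) ((\<lambda>(i, j) \<omega>. A \<omega> $ i $ j) p \<omega>)) UNIV"
    by (rule indep_vars_compose2[OF ind]) simp
  have indY: "indep_vars (\<lambda>_. borel) Y P"
    unfolding Y_def[abs_def] using indep_vars_subset[OF indY0, of P]
    by (simp add: split_beta)
  have NY: "distributed M lborel (Y p) (normal_density 0 \<bar>v $ snd p\<bar>)" if "p \<in> P" for p
  proof -
    have vj: "v $ snd p \<noteq> 0" using that by (auto simp: P_def J_def)
    have "distributed M lborel (\<lambda>x. 0 + v $ snd p * A x $ fst p $ snd p)
        (normal_density (0 + v $ snd p * 0) (\<bar>v $ snd p\<bar> * 1))"
      by (rule normal_density_affine[OF N]) (use vj in auto)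
    moreover have "(\<lambda>x. v $ snd p * A x $ fst p $ snd p) = Y p"
      by (simp add: Y_def fun_eq_iff mult.commute)
    ultimately show ?thesis by simp
  qed
  have sumN: "distributed M lborel (\<lambda>x. \<Sum>p\<in>P. Y p x)
      (normal_density (\<Sum>p\<in>P. 0) (sqrt (\<Sum>p\<in>P. (\<bar>v $ snd p\<bar>)\<^sup>2)))"
    by (rule sum_indep_normal[OF P indY]) (auto simp: NY P_def J_def)
  have eqS: "(\<Sum>p\<in>P. Y p x) = (A x *v v) $ i" for x
  proof -
    have "(\<Sum>p\<in>P. Y p x) = (\<Sum>j\<in>J. A x $ i $ j * v $ j)"
      unfolding P_def by (subst sum.reindex) (auto simp: inj_on_def Y_def)
    also have "\<dots> = (\<Sum>j\<in>UNIV. A x $ i $ j * v $ j)"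
      by (rule sum.mono_neutral_left) (auto simp: J_def)
    finally show ?thesis by (simp add: mv_comp)
  qed
  have eqN: "sqrt (\<Sum>p\<in>P. (v $ snd p)\<^sup>2) = norm v"
  proof -
    have "(\<Sum>p\<in>P. (v $ snd p)\<^sup>2) = (\<Sum>j\<in>J. (v $ j)\<^sup>2)"
      unfolding P_def by (subst sum.reindex) (auto simp: inj_on_def)
    also have "\<dots> = (\<Sum>j\<in>UNIV. (v $ j)\<^sup>2)"
      by (rule sum.mono_neutral_left) (auto simp: J_def)
    also have "\<dots> = (norm v)\<^sup>2" by (simp add: norm_sq_vec)
    finally show ?thesis by simp
  qed
  have "distributed M lborel (\<lambda>\<omega>. (A \<omega> *v v) $ i) (normal_density 0 (norm v))"
    using sumN by (simp add: eqS eqN)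
  then have "distributed M lborel (\<lambda>\<omega>. ((A \<omega> *v v) $ i - 0) / norm v) std_normal_density"
    using normal_standard_normal_convert[of "norm v" "\<lambda>\<omega>. (A \<omega> *v v) $ i" 0] v by simp
  then show ?thesis by simp
qed

lemma (in prob_space) rows_indep:
  fixes A :: "'a \<Rightarrow> real^'n^'d" and v :: "real^'n"
  assumes ind: "indep_vars (\<lambda>_. borel) (\<lambda>(i, j) \<omega>. A \<omega> $ i $ j) UNIV"
  shows "indep_vars (\<lambda>_. borel) (\<lambda>i \<omega>. (A \<omega> *v v) $ i / norm v) UNIV"
proof -
  define K where "K i = ({i} \<times> (UNIV :: 'n set))" for i :: 'd
  have R: "indep_vars (\<lambda>i. PiM (K i) (\<lambda>_. borel))
      (\<lambda>i \<omega>. restrict (\<lambda>p. (\<lambda>(i, j) \<omega>. A \<omega> $ i $ j) p \<omega>) (K i)) UNIV"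
    by (rule indep_vars_restrict[OF ind]) (auto simp: K_def disjoint_family_on_def)
  have meas: "(\<lambda>h. (\<Sum>j\<in>UNIV. h (i, j) * v $ j) / norm v) \<in> borel_measurable (PiM (K i) (\<lambda>_. borel))" for i
  proof -
    have "\<And>j. (\<lambda>h. h (i, j)) \<in> borel_measurable (PiM (K i) (\<lambda>_. borel))"
      by (rule measurable_component_singleton) (simp add: K_def)
    then show ?thesis by measurable
  qed
  have "indep_vars (\<lambda>_. borel) (\<lambda>i \<omega>. (\<lambda>h. (\<Sum>j\<in>UNIV. h (i, j) * v $ j) / norm v)
      (restrict (\<lambda>p. (\<lambda>(i, j) \<omega>. A \<omega> $ i $ j) p \<omega>) (K i))) UNIV"
    by (rule indep_vars_compose2[OF R meas])
  then show ?thesis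
    by (simp add: K_def mv_comp)
qed

lemma norm_Av_sq:
  fixes m :: "real^'n^'d" and v :: "real^'n"
  assumes "v \<noteq> 0"
  shows "(norm (m *v v))\<^sup>2 = (norm v)\<^sup>2 * (\<Sum>i\<in>UNIV. ((m *v v) $ i / norm v)\<^sup>2)"
  using assms by (simp add: norm_sq_vec[of "m *v v"] sum_distrib_left power_divide)

lemma (in prob_space) vec_lower:
  fixes A :: "'a \<Rightarrow> real^'n^'d" and v :: "real^'n" and \<tau> :: real
  assumes ind: "indep_vars (\<lambda>_. borel) (\<lambda>(i, j) \<omega>. A \<omega> $ i $ j) UNIV"
    and N: "\<And>i j. distributed M lborel (\<lambda>\<omega>. A \<omega> $ i $ j) std_normal_density"
    and t: "0 < \<tau>" "\<tau> < 1"
  shows "prob {\<omega>\<in>space M. (norm (A \<omega> *v v))\<^sup>2 < (1 - \<tau>) * CARD('d) * (norm v)\<^sup>2}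
     \<le> exp (CARD('d) / 2 * (\<tau> + ln (1 - \<tau>)))"
proof (cases "v = 0")
  case True
  then show ?thesis by simp
next
  case False
  define X where "X i \<omega> = (A \<omega> *v v) $ i / norm v" for i \<omega>
  have indX: "indep_vars (\<lambda>_. borel) X UNIV"
    unfolding X_def[abs_def] by (rule rows_indep[OF ind])
  have NX: "distributed M lborel (X i) std_normal_density" for i
    unfolding X_def[abs_def] by (rule row_normal[OF ind N False])
  have hX[measurable]: "\<And>i. X i \<in> borel_measurable M"
    using distributed_measurable[OF NX] by simp
  have sub: "{\<omega>\<in>space M. (norm (A \<omega> *v v))\<^sup>2 < (1 - \<tau>) * CARD('d) * (norm v)\<^sup>2}
     \<subseteq> {\<omega>\<in>space M. (\<Sum>i\<in>UNIV. (X i \<omega>)\<^sup>2) \<le> (1 - \<tau>) * card (UNIV :: 'd set)}"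
  proof safe
    fix \<omega> assume "\<omega> \<in> space M" and lt: "(norm (A \<omega> *v v))\<^sup>2 < (1 - \<tau>) * CARD('d) * (norm v)\<^sup>2"
    have "(norm v)\<^sup>2 * (\<Sum>i\<in>UNIV. (X i \<omega>)\<^sup>2) < (norm v)\<^sup>2 * ((1 - \<tau>) * CARD('d))"
      using lt norm_Av_sq[OF False, of "A \<omega>"] by (simp add: X_def algebra_simps)
    then show "(\<Sum>i\<in>UNIV. (X i \<omega>)\<^sup>2) \<le> (1 - \<tau>) * card (UNIV :: 'd set)"
      using False by (simp add: mult_less_cancel_left)
  qed
  have "prob {\<omega>\<in>space M. (norm (A \<omega> *v v))\<^sup>2 < (1 - \<tau>) * CARD('d) * (norm v)\<^sup>2}
      \<le> prob {\<omega>\<in>space M. (\<Sum>i\<in>UNIV. (X i \<omega>)\<^sup>2) \<le> (1 - \<tau>) * card (UNIV :: 'd set)}"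
    by (rule finite_measure_mono[OF sub]) measurable
  also have "\<dots> \<le> exp (card (UNIV :: 'd set) / 2 * (\<tau> + ln (1 - \<tau>)))"
    by (rule chi_lower[OF _ indX NX t]) simp
  finally show ?thesis .
qed

lemma (in prob_space) vec_upper:
  fixes A :: "'a \<Rightarrow> real^'n^'d" and v :: "real^'n" and \<tau> :: real
  assumes ind: "indep_vars (\<lambda>_. borel) (\<lambda>(i, j) \<omega>. A \<omega> $ i $ j) UNIV"
    and N: "\<And>i j. distributed M lborel (\<lambda>\<omega>. A \<omega> $ i $ j) std_normal_density"
    and t: "0 < \<tau>"
  shows "prob {\<omega>\<in>space M. (1 + \<tau>) * CARD('d) * (norm v)\<^sup>2 < (norm (A \<omega> *v v))\<^sup>2}
     < exp (- (CARD('d) / 2) * (\<tau> - ln (1 + \<tau>)))"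
proof (cases "v = 0")
  case True
  then show ?thesis by simp
next
  case False
  define X where "X i \<omega> = (A \<omega> *v v) $ i / norm v" for i \<omega>
  have indX: "indep_vars (\<lambda>_. borel) X UNIV"
    unfolding X_def[abs_def] by (rule rows_indep[OF ind])
  have NX: "distributed M lborel (X i) std_normal_density" for i
    unfolding X_def[abs_def] by (rule row_normal[OF ind N False])
  have hX[measurable]: "\<And>i. X i \<in> borel_measurable M"
    using distributed_measurable[OF NX] by simp
  have sub: "{\<omega>\<in>space M. (1 + \<tau>) * CARD('d) * (norm v)\<^sup>2 < (norm (A \<omega> *v v))\<^sup>2}
     \<subseteq> {\<omega>\<in>space M. (1 + \<tau>) * card (UNIV :: 'd set) \<le> (\<Sum>i\<in>UNIV. (X i \<omega>)\<^sup>2)}"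
  proof safe
    fix \<omega> assume "\<omega> \<in> space M" and lt: "(1 + \<tau>) * CARD('d) * (norm v)\<^sup>2 < (norm (A \<omega> *v v))\<^sup>2"
    have "(norm v)\<^sup>2 * ((1 + \<tau>) * CARD('d)) < (norm v)\<^sup>2 * (\<Sum>i\<in>UNIV. (X i \<omega>)\<^sup>2)"
      using lt norm_Av_sq[OF False, of "A \<omega>"] by (simp add: X_def algebra_simps)
    then show "(1 + \<tau>) * card (UNIV :: 'd set) \<le> (\<Sum>i\<in>UNIV. (X i \<omega>)\<^sup>2)"
      using False by (simp add: mult_less_cancel_left)
  qed
  have "prob {\<omega>\<in>space M. (1 + \<tau>) * CARD('d) * (norm v)\<^sup>2 < (norm (A \<omega> *v v))\<^sup>2}
      \<le> prob {\<omega>\<in>space M. (1 + \<tau>) * card (UNIV :: 'd set) \<le> (\<Sum>i\<in>UNIV. (X i \<omega>)\<^sup>2)}"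
    by (rule finite_measure_mono[OF sub]) measurable
  also have "\<dots> < exp (- (card (UNIV :: 'd set) / 2) * (\<tau> - ln (1 + \<tau>)))"
    by (rule chi_upper[OF _ _ indX NX t]) simp_all
  finally show ?thesis .
qed


theorem theorem2:
  fixes Q :: "(real^'n) set" and r :: nat and E :: "real^'n \<Rightarrow> nat" and D :: "nat \<Rightarrow> real^'n"
    and \<delta> \<zeta> \<tau>1 \<tau>2 :: real and xo :: "real^'n"
    and M :: "'w measure" and A :: "'w \<Rightarrow> real^'n^'d"
  assumes "compact Q"
    and "compression_code Q r E D"
    and "\<delta> = distortion Q E D"
    and "prob_space M"
    and "prob_space.indep_vars M (\<lambda>_. borel) (\<lambda>(i, j) \<omega>. A \<omega> $ i $ j) UNIV"
    and "\<And>i j. distributed M lborel (\<lambda>\<omega>. A \<omega> $ i $ j) std_normal_density"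
    and "xo \<in> Q"
    and "\<tau>1 > 0" and "0 < \<tau>2" and "\<tau>2 < 1"
  shows "\<exists>S\<in>sets M.
     measure M S > 1 - 2 ^ r * exp (real CARD('d) / 2 * (\<tau>2 + ln (1 - \<tau>2)))
                     - exp (- (real CARD('d) / 2) * (\<tau>1 - ln (1 + \<tau>1))) \<and>
     (\<forall>\<omega>\<in>S. \<forall>z :: real^'d. \<forall>xhat.
        norm z \<le> \<zeta> \<longrightarrow>
        xhat \<in> codebook Q E D \<longrightarrow>
        (\<forall>c\<in>codebook Q E D. (norm ((A \<omega> *v xo + z) - A \<omega> *v xhat))\<^sup>2
                               \<le> (norm ((A \<omega> *v xo + z) - A \<omega> *v c))\<^sup>2) \<longrightarrow>
        norm (xhat - xo) \<le> \<delta> * sqrt ((1 + \<tau>1) / (1 - \<tau>2))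
                            + 2 * \<zeta> / sqrt ((1 - \<tau>2) * real CARD('d)))"
proof -
  note Q = assms(1) and code = assms(2) and del = assms(3) and ind = assms(5) and N = assms(6)
    and xo = assms(7) and t1 = assms(8) and t2 = assms(9,10)
  interpret prob_space M by (rule assms(4))
  define d where "d = real CARD('d)"
  have d: "0 < d" by (simp add: d_def)
  define C where "C = codebook Q E D"
  define xt where "xt = D (E xo)"
  have xtC: "xt \<in> C" using xo by (simp add: C_def codebook_def xt_def)
  have Csub: "C \<subseteq> D ` {1..2^r}"
    using code by (auto simp: C_def codebook_def compression_code_def)
  have Cfin: "finite C" using Csub finite_subset by blast
  have Ccard: "card C \<le> 2^r"
    using card_mono[OF _ Csub] card_image_le[of "{1..2^r}" D] by simp
  have dxt: "norm (xo - xt) \<le> \<delta>"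
  proof -
    obtain B where B: "\<And>x. x \<in> Q \<Longrightarrow> norm x \<le> B"
      using compact_imp_bounded[OF Q] by (auto simp: bounded_iff)
    have "norm (x - D (E x)) \<le> B + (\<Sum>c\<in>C. norm c)" if "x \<in> Q" for x
    proof -
      have "D (E x) \<in> C" using that by (simp add: C_def codebook_def)
      then have "norm (D (E x)) \<le> (\<Sum>c\<in>C. norm c)"
        using Cfin by (intro member_le_sum) auto
      then show ?thesis using B[OF that] norm_triangle_ineq4[of x "D (E x)"] by linarith
    qed
    then have "bdd_above ((\<lambda>x. norm (x - D (E x))) ` Q)"
      by (intro bdd_aboveI2) auto
    then show ?thesis
      unfolding del distortion_def xt_def using xo by (intro cSUP_upper)
  qed
  have Am[measurable]: "\<And>i j. (\<lambda>\<omega>. A \<omega> $ i $ j) \<in> borel_measurable M"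
    using distributed_measurable[OF N] by simp
  have nm[measurable]: "(\<lambda>\<omega>. (norm (A \<omega> *v v))\<^sup>2) \<in> borel_measurable M" for v
    by (simp only: norm_sq_vec mv_comp) measurable
  define B1 where "B1 = exp (d / 2 * (\<tau>2 + ln (1 - \<tau>2)))"
  define B2 where "B2 = exp (- (d / 2) * (\<tau>1 - ln (1 + \<tau>1)))"
  define Bad where "Bad c = {\<omega>\<in>space M. (norm (A \<omega> *v (c - xo)))\<^sup>2 < (1 - \<tau>2) * CARD('d) * (norm (c - xo))\<^sup>2}" for c
  define Bad1 where "Bad1 = {\<omega>\<in>space M. (1 + \<tau>1) * CARD('d) * (norm (xt - xo))\<^sup>2 < (norm (A \<omega> *v (xt - xo)))\<^sup>2}"
  have Bad_m[measurable]: "Bad c \<in> sets M" for c unfolding Bad_def by measurable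
  have Bad1_m[measurable]: "Bad1 \<in> sets M" unfolding Bad1_def by measurable
  have pBad: "prob (Bad c) \<le> B1" for c
    unfolding Bad_def B1_def d_def by (rule vec_lower[OF ind N t2])
  have pBad1: "prob Bad1 < B2"
    unfolding Bad1_def B2_def d_def by (rule vec_upper[OF ind N t1])
  define S where "S = space M - (Bad1 \<union> (\<Union>c\<in>C. Bad c))"
  have U[measurable]: "(\<Union>c\<in>C. Bad c) \<in> sets M" using Cfin by (auto intro!: sets.finite_UN)
  have Sm: "S \<in> sets M" unfolding S_def by measurable
  have "prob (Bad1 \<union> (\<Union>c\<in>C. Bad c)) \<le> prob Bad1 + prob (\<Union>c\<in>C. Bad c)"
    using Cfin by (intro measure_Un_le) (auto intro!: sets.finite_UN)
  also have "prob (\<Union>c\<in>C. Bad c) \<le> (\<Sum>c\<in>C. prob (Bad c))"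
    using Cfin by (intro finite_measure_subadditive_finite) auto
  also have "\<dots> \<le> (\<Sum>c\<in>C. B1)" by (intro sum_mono pBad)
  also have "\<dots> = card C * B1" by simp
  also have "\<dots> \<le> 2^r * B1"
    using Ccard by (intro mult_right_mono) (auto simp: B1_def)
  finally have pU: "prob (Bad1 \<union> (\<Union>c\<in>C. Bad c)) < B2 + 2^r * B1" using pBad1 by linarith
  have "prob S = 1 - prob (Bad1 \<union> (\<Union>c\<in>C. Bad c))"
    unfolding S_def by (intro prob_compl) measurable
  then have mS: "measure M S > 1 - 2 ^ r * B1 - B2" using pU by linarith
  show ?thesis
  proof (intro bexI[OF _ Sm] conjI)
    show "measure M S > 1 - 2 ^ r * exp (real CARD('d) / 2 * (\<tau>2 + ln (1 - \<tau>2)))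
                     - exp (- (real CARD('d) / 2) * (\<tau>1 - ln (1 + \<tau>1)))"
      using mS by (simp add: B1_def B2_def d_def)
    show "\<forall>\<omega>\<in>S. \<forall>z :: real^'d. \<forall>xhat.
        norm z \<le> \<zeta> \<longrightarrow>
        xhat \<in> codebook Q E D \<longrightarrow>
        (\<forall>c\<in>codebook Q E D. (norm ((A \<omega> *v xo + z) - A \<omega> *v xhat))\<^sup>2
                               \<le> (norm ((A \<omega> *v xo + z) - A \<omega> *v c))\<^sup>2) \<longrightarrow>
        norm (xhat - xo) \<le> \<delta> * sqrt ((1 + \<tau>1) / (1 - \<tau>2))
                            + 2 * \<zeta> / sqrt ((1 - \<tau>2) * real CARD('d))"
    proof (intro ballI allI impI)
      fix \<omega> z xhat
      assume \<omega>: "\<omega> \<in> S" and z: "norm z \<le> \<zeta>" and xh: "xhat \<in> codebook Q E D"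
        and opt: "\<forall>c\<in>codebook Q E D. (norm ((A \<omega> *v xo + z) - A \<omega> *v xhat))\<^sup>2
                               \<le> (norm ((A \<omega> *v xo + z) - A \<omega> *v c))\<^sup>2"
      define u where "u = xhat - xo"
      define w where "w = xt - xo"
      have sp: "\<omega> \<in> space M" and nb1: "\<omega> \<notin> Bad1" and nb: "\<omega> \<notin> Bad xhat"
        using \<omega> xh by (auto simp: S_def C_def)
      have lowu: "(1 - \<tau>2) * d * (norm u)\<^sup>2 \<le> (norm (A \<omega> *v u))\<^sup>2"
        using nb sp by (auto simp: Bad_def u_def d_def not_less)
      have upw: "(norm (A \<omega> *v w))\<^sup>2 \<le> (1 + \<tau>1) * d * (norm w)\<^sup>2"
        using nb1 sp by (auto simp: Bad1_def w_def d_def not_less)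
      have "(norm ((A \<omega> *v xo + z) - A \<omega> *v xhat))\<^sup>2 \<le> (norm ((A \<omega> *v xo + z) - A \<omega> *v xt))\<^sup>2"
        using opt xtC by (auto simp: C_def)
      then have "norm ((A \<omega> *v xo + z) - A \<omega> *v xhat) \<le> norm ((A \<omega> *v xo + z) - A \<omega> *v xt)"
        by (rule power2_le_imp_le) simp
      moreover have "(A \<omega> *v xo + z) - A \<omega> *v xhat = z - A \<omega> *v u"
        by (simp add: u_def matrix_vector_mult_diff_distrib algebra_simps)
      moreover have "(A \<omega> *v xo + z) - A \<omega> *v xt = z - A \<omega> *v w"
        by (simp add: w_def matrix_vector_mult_diff_distrib algebra_simps)
      ultimately have opt2: "norm (z - A \<omega> *v u) \<le> norm (z - A \<omega> *v w)" by simp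
      have "norm (A \<omega> *v u) \<le> norm (z - A \<omega> *v u) + norm z"
        using norm_triangle_ineq2[of "A \<omega> *v u" z] norm_minus_commute[of "A \<omega> *v u" z] by linarith
      also have "\<dots> \<le> norm (z - A \<omega> *v w) + norm z" using opt2 by simp
      also have "\<dots> \<le> norm (A \<omega> *v w) + 2 * \<zeta>"
        using norm_triangle_ineq4[of z "A \<omega> *v w"] z by linarith
      finally have key: "norm (A \<omega> *v u) \<le> norm (A \<omega> *v w) + 2 * \<zeta>" .
      define K where "K = sqrt ((1 - \<tau>2) * d)"
      define L where "L = sqrt ((1 + \<tau>1) * d)"
      have K: "0 < K" using t2 d by (simp add: K_def)
      have L: "0 \<le> L" using t1 d by (simp add: L_def)
      have "K * norm u = sqrt ((1 - \<tau>2) * d * (norm u)\<^sup>2)"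
        using t2 d by (simp add: K_def real_sqrt_mult)
      also have "\<dots> \<le> sqrt ((norm (A \<omega> *v u))\<^sup>2)" using lowu by (rule real_sqrt_le_mono)
      also have "\<dots> = norm (A \<omega> *v u)" by simp
      finally have lu: "K * norm u \<le> norm (A \<omega> *v u)" .
      have "norm (A \<omega> *v w) = sqrt ((norm (A \<omega> *v w))\<^sup>2)" by simp
      also have "\<dots> \<le> sqrt ((1 + \<tau>1) * d * (norm w)\<^sup>2)" using upw by (rule real_sqrt_le_mono)
      also have "\<dots> = L * norm w"
        using t1 d by (simp add: L_def real_sqrt_mult)
      also have "\<dots> \<le> L * \<delta>"
        using dxt L by (intro mult_left_mono) (auto simp: w_def norm_minus_commute)
      finally have lw: "norm (A \<omega> *v w) \<le> L * \<delta>" .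
      have "K * norm u \<le> L * \<delta> + 2 * \<zeta>" using lu key lw by linarith
      then have "norm u \<le> (L * \<delta> + 2 * \<zeta>) / K" using K by (simp add: field_simps)
      also have "\<dots> = \<delta> * (L / K) + 2 * \<zeta> / K" using K by (simp add: field_simps)
      also have "L / K = sqrt ((1 + \<tau>1) / (1 - \<tau>2))"
        using d by (simp add: L_def K_def real_sqrt_divide[symmetric])
      finally show "norm (xhat - xo) \<le> \<delta> * sqrt ((1 + \<tau>1) / (1 - \<tau>2))
                            + 2 * \<zeta> / sqrt ((1 - \<tau>2) * real CARD('d))"
        by (simp add: u_def K_def d_def)
    qed
  qed
qed

end
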